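(* Let $n\geq 3$ and $R=K[x_1,\ldots,x_n]$ a polynomial ring over a field $K$. Then the ideal $L=(x_ix_{i+1}x_{i+2} : i=1,\ldots,n-2)\subset R$ (the path ideal of paths of length two in the path graph on $x_1,\ldots,x_n$) is normally torsion-free.
   Context: An ideal $I$ in $R$ is normally torsion-free if $\mathrm{Ass}(R/I^k)\subseteq\mathrm{Ass}(R/I)$ for all $k\geq 1$, where $\mathrm{Ass}$ denotes the set of associated primes. *)

theory Defs
  imports "HOL-Library.Poly_Mapping" "HOL-Algebra.Ideal_Product"
begin

text \<open>Polynomial ring K[x_1,...,x_n]: finitely supported maps from monomials
  (exponent vectors nat =>0 nat) to coefficients in K, restricted to those
  polynomials all of whose monomials only involve the variables x_1,...,x_n.\<close>

definition poly_ring :: "nat \<Rightarrow> ((nat \<Rightarrow>\<^sub>0 nat) \<Rightarrow>\<^sub>0 'k::field) ring" where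
  "poly_ring n = \<lparr> carrier = {p. \<forall>m \<in> Poly_Mapping.keys p. Poly_Mapping.keys m \<subseteq> {1..n}},
                   mult = (*), one = 1, zero = 0, add = (+) \<rparr>"

definition var :: "nat \<Rightarrow> (nat \<Rightarrow>\<^sub>0 nat) \<Rightarrow>\<^sub>0 'k::field" where
  "var i = Poly_Mapping.single (Poly_Mapping.single i 1) 1"

definition path_ideal :: "nat \<Rightarrow> ((nat \<Rightarrow>\<^sub>0 nat) \<Rightarrow>\<^sub>0 'k::field) set" where
  "path_ideal n = genideal (poly_ring n)
     {var i * var (i+1) * var (i+2) | i. 1 \<le> i \<and> i \<le> n - 2}"

primrec ideal_pow :: "('a, 'b) ring_scheme \<Rightarrow> 'a set \<Rightarrow> nat \<Rightarrow> 'a set" where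
  "ideal_pow R I 0 = carrier R"
| "ideal_pow R I (Suc k) = ideal_prod R I (ideal_pow R I k)"

text \<open>Associated primes of the R-module R/I: primes that are annihilators
  (I : x) of some element x + I of R/I.\<close>
definition ass :: "('a, 'b) ring_scheme \<Rightarrow> 'a set \<Rightarrow> 'a set set" where
  "ass R I = {P. primeideal P R \<and>
                 (\<exists>x \<in> carrier R. P = {r \<in> carrier R. r \<otimes>\<^bsub>R\<^esub> x \<in> I})}"

definition normally_torsion_free :: "('a, 'b) ring_scheme \<Rightarrow> 'a set \<Rightarrow> bool" where
  "normally_torsion_free R I \<longleftrightarrow> (\<forall>k \<ge> 1. ass R (ideal_pow R I k) \<subseteq> ass R I)"

end

theory Submission
  imports Defs "HOL-Algebra.Subrings"
begin


type_synonym 'k pol = "(nat \<Rightarrow>\<^sub>0 nat) \<Rightarrow>\<^sub>0 'k"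


lemma keys_add_sub: "Poly_Mapping.keys (a + b) \<subseteq> Poly_Mapping.keys a \<union> Poly_Mapping.keys b"
  by (rule Poly_Mapping.keys_add)

lemma carrier_poly_ring: "carrier (poly_ring n) = {p. \<forall>m \<in> Poly_Mapping.keys p. Poly_Mapping.keys m \<subseteq> {1..n}}"
  by (simp add: poly_ring_def)

lemma poly_ring_simps[simp]: "mult (poly_ring n) = (*)" "one (poly_ring n) = 1" "zero (poly_ring n) = 0"
   "add (poly_ring n) = (+)"
  by (simp_all add: poly_ring_def)

lemma carr_add: "p \<in> carrier (poly_ring n) \<Longrightarrow> q \<in> carrier (poly_ring n) \<Longrightarrow> p + q \<in> carrier (poly_ring n)"
  unfolding carrier_poly_ring using keys_add_sub[of p q] by blast

lemma carr_mult: "p \<in> carrier (poly_ring n) \<Longrightarrow> q \<in> carrier (poly_ring n) \<Longrightarrow> p * q \<in> carrier (poly_ring n)"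
  unfolding carrier_poly_ring
proof safe
  fix m assume p: "\<forall>m\<in>Poly_Mapping.keys p. Poly_Mapping.keys m \<subseteq> {1..n}"
    and q: "\<forall>m\<in>Poly_Mapping.keys q. Poly_Mapping.keys m \<subseteq> {1..n}"
    and m: "m \<in> Poly_Mapping.keys (p*q)"
  then obtain a b where "m = a + b" "a \<in> Poly_Mapping.keys p" "b \<in> Poly_Mapping.keys q"
    using Poly_Mapping.keys_mult[of p q] by blast
  then show "\<And>x. x \<in> Poly_Mapping.keys m \<Longrightarrow> x \<in> {1..n}"
    using p q keys_add_sub[of a b] by blast
qed

lemma carr_uminus: "p \<in> carrier (poly_ring n) \<Longrightarrow> - p \<in> carrier (poly_ring n)"
  unfolding carrier_poly_ring by simp

lemma carr_zero[simp]: "0 \<in> carrier (poly_ring n)" and carr_one[simp]: "1 \<in> carrier (poly_ring n)"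
  unfolding carrier_poly_ring by auto

definition R0 :: "((nat \<Rightarrow>\<^sub>0 nat) \<Rightarrow>\<^sub>0 'k::field) ring" where
  "R0 = \<lparr> carrier = UNIV, mult = (*), one = 1, zero = 0, add = (+) \<rparr>"

lemma R0_simps[simp]: "carrier R0 = UNIV" "mult R0 = (*)" "one R0 = 1" "zero R0 = 0" "add R0 = (+)"
  by (simp_all add: R0_def)

lemma cring_R0: "cring (R0 :: ((nat \<Rightarrow>\<^sub>0 nat) \<Rightarrow>\<^sub>0 'k::field) ring)"
proof -
  have "\<exists>y. x + y = 0" for x :: "((nat \<Rightarrow>\<^sub>0 nat) \<Rightarrow>\<^sub>0 'k::field)"
    using add.right_inverse by blast
  thus ?thesis
    unfolding R0_def using add.right_inverse
    by unfold_locales (auto simp:algebra_simps Units_def)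
qed

lemma R0_minus: "\<ominus>\<^bsub>(R0 :: ((nat \<Rightarrow>\<^sub>0 nat) \<Rightarrow>\<^sub>0 'k::field) ring)\<^esub> x = - x"
proof -
  interpret cring "R0 :: ((nat \<Rightarrow>\<^sub>0 nat) \<Rightarrow>\<^sub>0 'k::field) ring" by (rule cring_R0)
  show ?thesis by (rule minus_equality) (auto simp: R0_def)
qed

lemma poly_ring_R0: "poly_ring n = R0 \<lparr> carrier := carrier (poly_ring n) \<rparr>"
  by (simp add: poly_ring_def R0_def)

lemma cring_poly_ring: "cring (poly_ring n :: ((nat \<Rightarrow>\<^sub>0 nat) \<Rightarrow>\<^sub>0 'k::field) ring)"
proof -
  interpret cring "R0 :: ((nat \<Rightarrow>\<^sub>0 nat) \<Rightarrow>\<^sub>0 'k::field) ring" by (rule cring_R0)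
  have "subring (carrier (poly_ring n)) (R0 :: ((nat \<Rightarrow>\<^sub>0 nat) \<Rightarrow>\<^sub>0 'k::field) ring)"
    by (rule subringI) (auto simp: R0_minus carr_add carr_mult carr_uminus simp del: poly_ring_simps)
  then have "subcring (carrier (poly_ring n)) (R0 :: ((nat \<Rightarrow>\<^sub>0 nat) \<Rightarrow>\<^sub>0 'k::field) ring)"
    by (rule subcringI')
  then have "cring (R0\<lparr>carrier := carrier (poly_ring n)\<rparr> :: 'k pol ring)"
    using subcring_iff[of "carrier (poly_ring n)"] by simp
  then show ?thesis by (metis poly_ring_R0)
qed


lemma poly_minus: 
  assumes "a \<in> carrier (poly_ring n :: ((nat \<Rightarrow>\<^sub>0 nat) \<Rightarrow>\<^sub>0 'k::field) ring)"
  shows "\<ominus>\<^bsub>(poly_ring n :: ((nat \<Rightarrow>\<^sub>0 nat) \<Rightarrow>\<^sub>0 'k::field) ring)\<^esub> a = - a"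
proof -
  interpret cring "poly_ring n :: ((nat \<Rightarrow>\<^sub>0 nat) \<Rightarrow>\<^sub>0 'k::field) ring" by (rule cring_poly_ring)
  show ?thesis by (rule minus_equality) (auto simp: assms carr_uminus)
qed

definition KI :: "nat \<Rightarrow> ((nat \<Rightarrow>\<^sub>0 nat) \<Rightarrow> bool) \<Rightarrow> ((nat \<Rightarrow>\<^sub>0 nat) \<Rightarrow>\<^sub>0 'k::field) set" where
  "KI n \<Phi> = {f \<in> carrier (poly_ring n). \<forall>m \<in> Poly_Mapping.keys f. \<Phi> m}"

lemma KI_ideal:
  assumes up: "\<And>m m'. \<Phi> m \<Longrightarrow> \<Phi> (m' + m)"
  shows "ideal (KI n \<Phi> :: ((nat \<Rightarrow>\<^sub>0 nat) \<Rightarrow>\<^sub>0 'k::field) set) (poly_ring n)"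
proof -
  interpret cring "poly_ring n :: ((nat \<Rightarrow>\<^sub>0 nat) \<Rightarrow>\<^sub>0 'k::field) ring" by (rule cring_poly_ring)
  have lc: "x * a \<in> KI n \<Phi>" if "a \<in> KI n \<Phi>" "x \<in> carrier (poly_ring n)" for a x :: "((nat \<Rightarrow>\<^sub>0 nat) \<Rightarrow>\<^sub>0 'k::field)"
  proof -
    have "\<Phi> m" if "m \<in> Poly_Mapping.keys (x * a)" for m
    proof -
      obtain b c where "m = b + c" "b \<in> Poly_Mapping.keys x" "c \<in> Poly_Mapping.keys a"
        using Poly_Mapping.keys_mult[of x a] \<open>m \<in> _\<close> by blast
      then show ?thesis using \<open>a \<in> KI n \<Phi>\<close> up unfolding KI_def by auto
    qed
    then show ?thesis using that carr_mult unfolding KI_def by auto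
  qed
  show ?thesis
  proof (rule idealI)
    show "ring (poly_ring n :: 'k pol ring)" by (rule ring_axioms)
    show "subgroup (KI n \<Phi> :: 'k pol set) (add_monoid (poly_ring n))"
    proof (rule add.subgroupI)
      show "(KI n \<Phi> :: 'k pol set) \<subseteq> carrier (poly_ring n)" unfolding KI_def by auto
      show "(KI n \<Phi> :: 'k pol set) \<noteq> {}" using carr_zero unfolding KI_def by force
      fix a :: "'k pol" assume "a \<in> KI n \<Phi>"
      then show "\<ominus>\<^bsub>poly_ring n\<^esub> a \<in> KI n \<Phi>"
        unfolding KI_def by (auto simp: poly_minus carr_uminus)
    next
      fix a b :: "'k pol" assume "a \<in> KI n \<Phi>" "b \<in> KI n \<Phi>"
      then show "a \<oplus>\<^bsub>poly_ring n\<^esub> b \<in> KI n \<Phi>"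
        unfolding KI_def using Poly_Mapping.keys_add[of a b] by (auto simp: carr_add)
    qed
    fix a x :: "'k pol" assume "a \<in> KI n \<Phi>" "x \<in> carrier (poly_ring n)"
    then show "x \<otimes>\<^bsub>poly_ring n\<^esub> a \<in> KI n \<Phi>" "a \<otimes>\<^bsub>poly_ring n\<^esub> x \<in> KI n \<Phi>"
      using lc by (auto simp: mult.commute)
  qed
qed

lemma poly_terms: "f = (\<Sum>m\<in>Poly_Mapping.keys f. Poly_Mapping.single m (Poly_Mapping.lookup f m))"
proof (rule poly_mapping_eqI)
  fix k
  have "Poly_Mapping.lookup (\<Sum>m\<in>Poly_Mapping.keys f. Poly_Mapping.single m (Poly_Mapping.lookup f m)) k
     = (\<Sum>m\<in>Poly_Mapping.keys f. if m = k then Poly_Mapping.lookup f m else 0)"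
    by (simp add: lookup_sum lookup_single when_def)
  also have "\<dots> = Poly_Mapping.lookup f k"
    by (simp add: sum.delta in_keys_iff)
  finally show "Poly_Mapping.lookup f k = Poly_Mapping.lookup (\<Sum>m\<in>Poly_Mapping.keys f. Poly_Mapping.single m (Poly_Mapping.lookup f m)) k" by simp
qed

lemma keys_single_sub: "Poly_Mapping.keys (Poly_Mapping.single m c) \<subseteq> {m}"
  by simp

lemma single_carrier: "Poly_Mapping.keys m \<subseteq> {1..n} \<Longrightarrow> Poly_Mapping.single m c \<in> carrier (poly_ring n)"
  unfolding carrier_poly_ring using keys_single_sub[of m c] by blast

lemma term_carrier: "f \<in> carrier (poly_ring n) \<Longrightarrow> m \<in> Poly_Mapping.keys f \<Longrightarrow> Poly_Mapping.single m c \<in> carrier (poly_ring n)"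
  unfolding carrier_poly_ring using keys_single_sub[of m c] by blast

lemma ideal_sum_closed:
  assumes "ideal I (poly_ring n :: ((nat \<Rightarrow>\<^sub>0 nat) \<Rightarrow>\<^sub>0 'k::field) ring)" "finite A" "\<And>a. a \<in> A \<Longrightarrow> t a \<in> I"
  shows "sum t A \<in> I"
  using assms(2,3)
proof (induction A rule: finite_induct)
  case empty
  then show ?case using additive_subgroup.zero_closed[OF ideal.axioms(1)[OF assms(1)]] by simp
next
  case (insert x F)
  then show ?case using additive_subgroup.a_closed[OF ideal.axioms(1)[OF assms(1)]] by simp
qed

lemma ideal_from_terms:
  assumes "ideal I (poly_ring n :: ((nat \<Rightarrow>\<^sub>0 nat) \<Rightarrow>\<^sub>0 'k::field) ring)"
    "\<And>m. m \<in> Poly_Mapping.keys f \<Longrightarrow> Poly_Mapping.single m (Poly_Mapping.lookup f m) \<in> I"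
  shows "f \<in> I"
  by (subst poly_terms) (rule ideal_sum_closed[OF assms(1)], auto intro: assms(2))

definition le_mon :: "(nat \<Rightarrow>\<^sub>0 nat) \<Rightarrow> (nat \<Rightarrow>\<^sub>0 nat) \<Rightarrow> bool" where
  "le_mon g m \<longleftrightarrow> (\<forall>i. Poly_Mapping.lookup g i \<le> Poly_Mapping.lookup m i)"

lemma le_mon_diff_add: "le_mon g m \<Longrightarrow> m - g + g = m"
  unfolding le_mon_def by (intro poly_mapping_eqI) (simp add: lookup_add lookup_minus)

lemma keys_diff_sub: "Poly_Mapping.keys ((m::nat \<Rightarrow>\<^sub>0 nat) - g) \<subseteq> Poly_Mapping.keys m"
  by (auto simp: in_keys_iff lookup_minus)

lemma le_mon_add: "le_mon g m \<Longrightarrow> le_mon h m' \<Longrightarrow> le_mon (g + h) (m + m')"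
  unfolding le_mon_def by (simp add: lookup_add add_mono)

lemma le_mon_refl: "le_mon g g" unfolding le_mon_def by simp

lemma le_mon_add_right: "le_mon g m \<Longrightarrow> le_mon g (m' + m)"
  unfolding le_mon_def lookup_add by (metis le_add2 order_trans)

lemma le_mon_zero: "le_mon 0 m" unfolding le_mon_def by simp

definition MI :: "nat \<Rightarrow> (nat \<Rightarrow>\<^sub>0 nat) set \<Rightarrow> ((nat \<Rightarrow>\<^sub>0 nat) \<Rightarrow>\<^sub>0 'k::field) set" where
  "MI n G = KI n (\<lambda>m. \<exists>g\<in>G. le_mon g m)"

lemma MI_ideal: "ideal (MI n G :: ((nat \<Rightarrow>\<^sub>0 nat) \<Rightarrow>\<^sub>0 'k::field) set) (poly_ring n)"
  unfolding MI_def by (rule KI_ideal) (auto intro: le_mon_add_right)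

lemma single_mult_split: "le_mon g m \<Longrightarrow>
   Poly_Mapping.single m c = Poly_Mapping.single (m - g) c * (Poly_Mapping.single g 1 :: ((nat \<Rightarrow>\<^sub>0 nat) \<Rightarrow>\<^sub>0 'k::field))"
  by (simp add: mult_single le_mon_diff_add)

definition mons :: "nat \<Rightarrow> (nat \<Rightarrow>\<^sub>0 nat) set" where
  "mons n = {g. Poly_Mapping.keys g \<subseteq> {1..n}}"

lemma genideal_MI:
  assumes G: "G \<subseteq> mons n"
  shows "genideal (poly_ring n) ((\<lambda>g. Poly_Mapping.single g (1::'k::field)) ` G) = MI n G"
proof -
  interpret cring "poly_ring n :: ((nat \<Rightarrow>\<^sub>0 nat) \<Rightarrow>\<^sub>0 'k::field) ring" by (rule cring_poly_ring)
  have sub: "(\<lambda>g. Poly_Mapping.single g (1::'k::field)) ` G \<subseteq> carrier (poly_ring n)"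
    using G single_carrier unfolding mons_def by blast
  show ?thesis
  proof
    show "genideal (poly_ring n) ((\<lambda>g. Poly_Mapping.single g (1::'k::field)) ` G) \<subseteq> MI n G"
    proof (rule genideal_minimal[OF MI_ideal])
      show "(\<lambda>g. Poly_Mapping.single g (1::'k::field)) ` G \<subseteq> MI n G"
        using sub unfolding MI_def KI_def by (auto intro: le_mon_refl)
    qed
    show "MI n G \<subseteq> genideal (poly_ring n) ((\<lambda>g. Poly_Mapping.single g (1::'k::field)) ` G)"
    proof
      fix f :: "((nat \<Rightarrow>\<^sub>0 nat) \<Rightarrow>\<^sub>0 'k::field)" assume f: "f \<in> MI n G"
      show "f \<in> genideal (poly_ring n) ((\<lambda>g. Poly_Mapping.single g (1::'k::field)) ` G)"
      proof (rule ideal_from_terms[OF genideal_ideal[OF sub]])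
        fix m assume m: "m \<in> Poly_Mapping.keys f"
        then obtain g where g: "g \<in> G" "le_mon g m" using f unfolding MI_def KI_def by auto
        have c: "Poly_Mapping.single (m - g) (Poly_Mapping.lookup f m) \<in> carrier (poly_ring n)"
          using f m keys_diff_sub[of m g] unfolding MI_def KI_def carrier_poly_ring by auto
        have "Poly_Mapping.single g 1 \<in> genideal (poly_ring n) ((\<lambda>g. Poly_Mapping.single g (1::'k::field)) ` G)"
          using genideal_self[OF sub] g by auto
        from ideal.I_l_closed[OF genideal_ideal[OF sub] this c]
        show "Poly_Mapping.single m (Poly_Mapping.lookup f m) \<in> genideal (poly_ring n) ((\<lambda>g. Poly_Mapping.single g (1::'k::field)) ` G)"
          using single_mult_split[OF g(2), of "Poly_Mapping.lookup f m"] by simp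
      qed
    qed
  qed
qed

definition msum :: "(nat \<Rightarrow>\<^sub>0 nat) set \<Rightarrow> (nat \<Rightarrow>\<^sub>0 nat) set \<Rightarrow> (nat \<Rightarrow>\<^sub>0 nat) set" where
  "msum G H = {g + h | g h. g \<in> G \<and> h \<in> H}"

lemma ideal_prod_MI:
  assumes G: "G \<subseteq> mons n" and H: "H \<subseteq> mons n"
  shows "ideal_prod (poly_ring n) (MI n G) (MI n H :: ((nat \<Rightarrow>\<^sub>0 nat) \<Rightarrow>\<^sub>0 'k::field) set) = MI n (msum G H)"
proof -
  interpret cring "poly_ring n :: ((nat \<Rightarrow>\<^sub>0 nat) \<Rightarrow>\<^sub>0 'k::field) ring" by (rule cring_poly_ring)
  show ?thesis
  proof
    show "ideal_prod (poly_ring n) (MI n G) (MI n H :: ((nat \<Rightarrow>\<^sub>0 nat) \<Rightarrow>\<^sub>0 'k::field) set) \<subseteq> MI n (msum G H)"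
    proof
      fix s :: "((nat \<Rightarrow>\<^sub>0 nat) \<Rightarrow>\<^sub>0 'k::field)"
      assume "s \<in> ideal_prod (poly_ring n) (MI n G) (MI n H)"
      then show "s \<in> MI n (msum G H)"
      proof (induct s rule: ideal_prod.induct)
        case (prod i j)
        have "\<exists>g\<in>msum G H. le_mon g m" if mk: "m \<in> Poly_Mapping.keys (i * j)" for m
        proof -
          obtain a b where ab: "m = a + b" "a \<in> Poly_Mapping.keys i" "b \<in> Poly_Mapping.keys j"
            using Poly_Mapping.keys_mult[of i j] mk by blast
          obtain g h where "g \<in> G" "le_mon g a" "h \<in> H" "le_mon h b"
            using prod ab unfolding MI_def KI_def by blast
          then show ?thesis using ab le_mon_add unfolding msum_def by blast
        qed
        then show ?case using prod carr_mult unfolding MI_def KI_def by auto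
      next
        case (sum s1 s2)
        then show ?case using additive_subgroup.a_closed[OF ideal.axioms(1)[OF MI_ideal[of n "msum G H"]]]
          by simp
      qed
    qed
    show "MI n (msum G H) \<subseteq> ideal_prod (poly_ring n) (MI n G) (MI n H :: ((nat \<Rightarrow>\<^sub>0 nat) \<Rightarrow>\<^sub>0 'k::field) set)"
    proof
      fix f :: "((nat \<Rightarrow>\<^sub>0 nat) \<Rightarrow>\<^sub>0 'k::field)" assume f: "f \<in> MI n (msum G H)"
      show "f \<in> ideal_prod (poly_ring n) (MI n G) (MI n H)"
      proof (rule ideal_from_terms[OF ideal_prod_is_ideal[OF MI_ideal MI_ideal]])
        fix m assume m: "m \<in> Poly_Mapping.keys f"
        then obtain g h where g: "g \<in> G" "h \<in> H" "le_mon (g + h) m" using f unfolding MI_def KI_def msum_def by auto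
        have hm: "le_mon h m" using g(3) unfolding le_mon_def lookup_add by (metis le_add2 order_trans)
        have gm: "le_mon g (m - h)" using g(3) unfolding le_mon_def lookup_add lookup_minus
          by (metis add_le_imp_le_diff)
        have c1: "Poly_Mapping.single (m - h) (Poly_Mapping.lookup f m) \<in> MI n G"
          using f m keys_diff_sub[of m h] g gm unfolding MI_def KI_def carrier_poly_ring by auto
        have "Poly_Mapping.keys h \<subseteq> {1..n}" using H g(2) unfolding mons_def by auto
        then have c2: "Poly_Mapping.single h (1::'k) \<in> MI n H"
          using g single_carrier[of h n] unfolding MI_def KI_def by (auto intro: le_mon_refl)
        show "Poly_Mapping.single m (Poly_Mapping.lookup f m) \<in> ideal_prod (poly_ring n) (MI n G) (MI n H)"
          using ideal_prod.prod[OF c1 c2, of "poly_ring n"] single_mult_split[OF hm, of "Poly_Mapping.lookup f m"]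
          by (metis poly_ring_simps(1))
      qed
    qed
  qed
qed




definition cover :: "nat \<Rightarrow> nat \<Rightarrow> nat set \<Rightarrow> bool" where
  "cover s n C \<longleftrightarrow> (\<forall>i. s \<le> i \<longrightarrow> i + 2 \<le> n \<longrightarrow> (i \<in> C \<or> Suc i \<in> C \<or> i + 2 \<in> C))"

definition em :: "nat \<Rightarrow> (nat \<Rightarrow>\<^sub>0 nat)" where
  "em i = Poly_Mapping.single i 1 + Poly_Mapping.single (Suc i) 1 + Poly_Mapping.single (i + 2) 1"

lemma lookup_em: "Poly_Mapping.lookup (em i) v = (if v = i \<or> v = Suc i \<or> v = i + 2 then 1 else 0)"
  by (auto simp: em_def lookup_add lookup_single when_def)

definition Es :: "nat \<Rightarrow> nat \<Rightarrow> (nat \<Rightarrow>\<^sub>0 nat) set" where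
  "Es s n = {em i | i. s \<le> i \<and> i + 2 \<le> n}"

primrec Gs :: "(nat \<Rightarrow>\<^sub>0 nat) set \<Rightarrow> nat \<Rightarrow> (nat \<Rightarrow>\<^sub>0 nat) set" where
  "Gs E 0 = {0}"
| "Gs E (Suc k) = msum E (Gs E k)"

lemma Gs_mono: "E \<subseteq> E' \<Longrightarrow> Gs E k \<subseteq> Gs E' k"
  by (induction k) (auto simp: msum_def)

lemma Gs_add_rep:
  assumes "e \<in> E" "g \<in> Gs E j"
  shows "\<exists>g'\<in>Gs E (c + j). \<forall>v. Poly_Mapping.lookup g' v = c * Poly_Mapping.lookup e v + Poly_Mapping.lookup g v"
proof (induction c)
  case 0
  then show ?case using assms by auto
next
  case (Suc c)
  then obtain g' where g': "g' \<in> Gs E (c + j)" "\<forall>v. Poly_Mapping.lookup g' v = c * Poly_Mapping.lookup e v + Poly_Mapping.lookup g v"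
    by blast
  then have "e + g' \<in> Gs E (Suc c + j)" using assms(1) by (auto simp: msum_def)
  moreover have "\<forall>v. Poly_Mapping.lookup (e + g') v = Suc c * Poly_Mapping.lookup e v + Poly_Mapping.lookup g v"
    using g' by (simp add: lookup_add)
  ultimately show ?case by blast
qed

lemma comb:
  assumes "\<And>C. finite C \<Longrightarrow> cover s n C \<Longrightarrow> k \<le> (\<Sum>v\<in>C. a v)"
  shows "\<exists>g\<in>Gs (Es s n) k. \<forall>v. Poly_Mapping.lookup g v \<le> a v"
  using assms
proof (induction "n - s" arbitrary: s a k rule: less_induct)
  case less
  show ?case
  proof (cases "s + 2 \<le> n")
    case False
    then have "cover s n {}" unfolding cover_def by auto
    then have "k = 0" using less.prems[of "{}"] by simp
    then show ?thesis by auto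
  next
    case True
    have es: "em s \<in> Es s n" using True unfolding Es_def by auto
    define c where "c = min (a s) (min (a (Suc s)) (a (s + 2)))"
    have cle: "c * Poly_Mapping.lookup (em s) v \<le> a v" for v
      unfolding c_def lookup_em by auto
    show ?thesis
    proof (cases "k \<le> c")
      case True
      have z: "0 \<in> Gs (Es s n) 0" by simp
      obtain g' where g': "g' \<in> Gs (Es s n) (k + 0)" "\<forall>v. Poly_Mapping.lookup g' v = k * Poly_Mapping.lookup (em s) v + Poly_Mapping.lookup 0 v"
        using Gs_add_rep[OF es z, of k] by blast
      have "Poly_Mapping.lookup g' v \<le> a v" for v
      proof -
        have "k * Poly_Mapping.lookup (em s) v \<le> c * Poly_Mapping.lookup (em s) v"
          using True by (rule mult_right_mono) simp
        moreover have "Poly_Mapping.lookup g' v = k * Poly_Mapping.lookup (em s) v" using g'(2) by simp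
        ultimately show ?thesis using cle[of v] by linarith
      qed
      then show ?thesis using g'(1) by auto
    next
      case False
      define a' where "a' v = a v - c * Poly_Mapping.lookup (em s) v" for v
      have a'a: "a v = a' v + c * Poly_Mapping.lookup (em s) v" for v
        using cle[of v] unfolding a'_def by simp
      have hyp: "k - c \<le> (\<Sum>v\<in>C'. a' v)" if C': "finite C'" "cover (Suc s) n C'" for C'
      proof -
        define E where "E = {s, Suc s, s + 2}"
        define v0 where "v0 = (if s + 2 \<in> C' then s + 2 else if Suc s \<in> C' then Suc s
           else if a s = c then s else if a (Suc s) = c then Suc s else s + 2)"
        have v0E: "v0 \<in> E" unfolding v0_def E_def by auto
        have av0: "v0 \<in> C' \<or> a v0 = c" unfolding v0_def c_def by auto
        define C where "C = insert v0 (C' - E)"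
        have fin: "finite C" unfolding C_def using C' by auto
        have cov: "cover s n C"
          unfolding cover_def
        proof (intro allI impI)
          fix i assume i: "s \<le> i" "i + 2 \<le> n"
          show "i \<in> C \<or> Suc i \<in> C \<or> i + 2 \<in> C"
          proof (cases "i = s")
            case True
            then show ?thesis using v0E unfolding C_def E_def by auto
          next
            case False
            then have "Suc s \<le> i" using i by auto
            then have "i \<in> C' \<or> Suc i \<in> C' \<or> i + 2 \<in> C'" using C'(2) i unfolding cover_def by auto
            then show ?thesis using \<open>Suc s \<le> i\<close> unfolding C_def E_def v0_def by auto
          qed
        qed
        have "k \<le> (\<Sum>v\<in>C. a v)" using less.prems fin cov by auto
        also have "(\<Sum>v\<in>C. a v) = a v0 + (\<Sum>v\<in>C' - E. a v)"
          unfolding C_def using C' v0E by (simp add: sum.insert)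
        also have "(\<Sum>v\<in>C' - E. a v) = (\<Sum>v\<in>C' - E. a' v)"
          by (rule sum.cong) (auto simp: a'a lookup_em E_def)
        also have "a v0 = a' v0 + c" using a'a[of v0] v0E by (auto simp: lookup_em E_def)
        finally have 1: "k \<le> a' v0 + c + (\<Sum>v\<in>C' - E. a' v)" .
        have 2: "a' v0 + (\<Sum>v\<in>C' - E. a' v) \<le> (\<Sum>v\<in>C'. a' v)"
        proof (cases "v0 \<in> C'")
          case True
          have "a' v0 + (\<Sum>v\<in>C' - E. a' v) = (\<Sum>v\<in>insert v0 (C' - E). a' v)"
            using C' v0E by (simp add: sum.insert)
          also have "\<dots> \<le> (\<Sum>v\<in>C'. a' v)"
            by (rule sum_mono2) (use C' True in auto)
          finally show ?thesis .
        next
          case False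
          then have "a' v0 = 0" using av0 a'a[of v0] v0E by (auto simp: lookup_em E_def)
          then show ?thesis using C' by (auto intro: sum_mono2)
        qed
        show ?thesis using 1 2 by linarith
      qed
      have "n - Suc s < n - s" using True by auto
      then obtain g' where g': "g' \<in> Gs (Es (Suc s) n) (k - c)" "\<forall>v. Poly_Mapping.lookup g' v \<le> a' v"
        using less.hyps[of "Suc s" "k - c" a'] hyp by blast
      have "Es (Suc s) n \<subseteq> Es s n" unfolding Es_def by auto
      then have "g' \<in> Gs (Es s n) (k - c)" using g'(1) Gs_mono by blast
      then obtain g'' where g'': "g'' \<in> Gs (Es s n) (c + (k - c))"
        "\<forall>v. Poly_Mapping.lookup g'' v = c * Poly_Mapping.lookup (em s) v + Poly_Mapping.lookup g' v"
        using Gs_add_rep[OF es, of g' "k - c" c] by blast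
      have "c + (k - c) = k" using False by simp
      moreover have "Poly_Mapping.lookup g'' v \<le> a v" for v
        using g''(2) g'(2) a'a[of v] by (metis add.commute add_le_cancel_right)
      ultimately show ?thesis using g''(1) by auto
    qed
  qed
qed




definition dg :: "nat set \<Rightarrow> (nat \<Rightarrow>\<^sub>0 nat) \<Rightarrow> nat" where
  "dg C m = (\<Sum>i\<in>C. Poly_Mapping.lookup m i)"

lemma dg_add: "dg C (m + m') = dg C m + dg C m'"
  unfolding dg_def by (simp add: lookup_add sum.distrib)

lemma dg_mono: "finite C \<Longrightarrow> le_mon g m \<Longrightarrow> dg C g \<le> dg C m"
  unfolding dg_def le_mon_def by (rule sum_mono) auto

lemma dg_em: 
  assumes "finite C" "cover 1 n C" "e \<in> Es 1 n"
  shows "1 \<le> dg C e"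
proof -
  obtain i where i: "e = em i" "1 \<le> i" "i + 2 \<le> n" using assms(3) unfolding Es_def by auto
  then obtain u where u: "u \<in> C" "u = i \<or> u = Suc i \<or> u = i + 2" using assms(2) unfolding cover_def by blast
  have "Poly_Mapping.lookup e u \<le> dg C e"
    unfolding dg_def by (rule member_le_sum) (use u assms(1) in auto)
  then show ?thesis using u i by (simp add: lookup_em)
qed

lemma dg_Gs:
  assumes "finite C" "cover 1 n C"
  shows "g \<in> Gs (Es 1 n) k \<Longrightarrow> k \<le> dg C g"
proof (induction k arbitrary: g)
  case 0
  then show ?case by simp
next
  case (Suc k)
  then obtain e h where eh: "g = e + h" "e \<in> Es 1 n" "h \<in> Gs (Es 1 n) k" by (auto simp: msum_def)
  have "k \<le> dg C h" using Suc.IH[OF eh(3)] .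
  moreover have "1 \<le> dg C e" using dg_em[OF assms eh(2)] .
  ultimately show ?case using eh(1) by (simp add: dg_add)
qed

lemma exists_min:
  assumes "finite A" "P A"
  shows "\<exists>B\<subseteq>A. P B \<and> (\<forall>B'. B' \<subset> B \<longrightarrow> \<not> P B')"
  using assms
proof (induction "card A" arbitrary: A rule: less_induct)
  case less
  show ?case
  proof (cases "\<forall>B'. B' \<subset> A \<longrightarrow> \<not> P B'")
    case True
    then show ?thesis using less.prems by auto
  next
    case False
    then obtain B' where "B' \<subset> A" "P B'" by auto
    moreover have "card B' < card A" using \<open>B' \<subset> A\<close> less.prems(1) by (rule psubset_card_mono[rotated])
    ultimately show ?thesis using less.hyps[of B'] less.prems(1) finite_subset
      by (metis psubset_imp_subset order_trans)
  qed
qed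

definition MC :: "nat \<Rightarrow> nat set set" where
  "MC n = {C. C \<subseteq> {1..n} \<and> cover 1 n C \<and> (\<forall>C'. C' \<subset> C \<longrightarrow> \<not> cover 1 n C')}"

lemma finite_MC: "finite (MC n)"
proof -
  have "MC n \<subseteq> Pow {1..n}" unfolding MC_def by auto
  then show ?thesis by (rule finite_subset) auto
qed

lemma MC_finite: "C \<in> MC n \<Longrightarrow> finite C"
  unfolding MC_def by (auto intro: finite_subset)

lemma char:
  "(\<exists>g\<in>Gs (Es 1 n) k. le_mon g m) \<longleftrightarrow> (\<forall>C\<in>MC n. k \<le> dg C m)"
proof
  assume "\<exists>g\<in>Gs (Es 1 n) k. le_mon g m"
  then obtain g where g: "g \<in> Gs (Es 1 n) k" "le_mon g m" by blast
  show "\<forall>C\<in>MC n. k \<le> dg C m"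
  proof
    fix C assume C: "C \<in> MC n"
    then have "finite C" "cover 1 n C" using MC_finite unfolding MC_def by auto
    then show "k \<le> dg C m" using dg_Gs g dg_mono by (meson le_trans)
  qed
next
  assume H: "\<forall>C\<in>MC n. k \<le> dg C m"
  have "\<exists>g\<in>Gs (Es 1 n) k. \<forall>v. Poly_Mapping.lookup g v \<le> Poly_Mapping.lookup m v"
  proof (rule comb)
    fix C assume C: "finite C" "cover 1 n C"
    have "cover 1 n (C \<inter> {1..n})" using C(2) unfolding cover_def by auto
    then obtain B where B: "B \<subseteq> C \<inter> {1..n}" "cover 1 n B" "\<forall>B'. B' \<subset> B \<longrightarrow> \<not> cover 1 n B'"
      using exists_min[of "C \<inter> {1..n}" "cover 1 n"] by auto
    then have "B \<in> MC n" unfolding MC_def by auto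
    then have "k \<le> dg B m" using H by auto
    also have "dg B m \<le> (\<Sum>v\<in>C. Poly_Mapping.lookup m v)"
      unfolding dg_def by (rule sum_mono2) (use B C in auto)
    finally show "k \<le> (\<Sum>v\<in>C. Poly_Mapping.lookup m v)" .
  qed
  then show "\<exists>g\<in>Gs (Es 1 n) k. le_mon g m" unfolding le_mon_def by auto
qed

definition restr :: "((nat \<Rightarrow>\<^sub>0 nat) \<Rightarrow> bool) \<Rightarrow> 'k::field pol \<Rightarrow> 'k pol" where
  "restr P f = Abs_poly_mapping (\<lambda>m. if P m then Poly_Mapping.lookup f m else 0)"

lemma lookup_restr: "Poly_Mapping.lookup (restr P f) m = (if P m then Poly_Mapping.lookup f m else 0)"
proof -
  have "{m. (if P m then Poly_Mapping.lookup f m else 0) \<noteq> 0} \<subseteq> Poly_Mapping.keys f"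
  proof
    fix x assume "x \<in> {m. (if P m then Poly_Mapping.lookup f m else 0) \<noteq> 0}"
    then show "x \<in> Poly_Mapping.keys f" by (cases "P x") (auto simp: in_keys_iff)
  qed
  then have "finite {m. (if P m then Poly_Mapping.lookup f m else 0) \<noteq> 0}"
    using finite_subset finite_keys by blast
  then show ?thesis unfolding restr_def by simp
qed

lemma keys_restr: "Poly_Mapping.keys (restr P f) = {m \<in> Poly_Mapping.keys f. P m}"
  unfolding set_eq_iff by (simp add: in_keys_iff lookup_restr)

lemma restr_split: "f = restr P f + restr (\<lambda>m. \<not> P m) f"
  by (rule poly_mapping_eqI) (simp add: lookup_add lookup_restr)

lemma keys_mult_dg:
  assumes "\<forall>m\<in>Poly_Mapping.keys p. A \<le> dg C m" "\<forall>m\<in>Poly_Mapping.keys q. B \<le> dg C m"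
  shows "\<forall>m\<in>Poly_Mapping.keys (p * q). A + B \<le> dg C m"
proof
  fix m assume "m \<in> Poly_Mapping.keys (p * q)"
  then obtain a b where "m = a + b" "a \<in> Poly_Mapping.keys p" "b \<in> Poly_Mapping.keys q"
    using Poly_Mapping.keys_mult[of p q] by blast
  then show "A + B \<le> dg C m" using assms by (auto simp: dg_add intro: add_mono)
qed

lemma keys_mult_dg_eq:
  assumes "\<forall>m\<in>Poly_Mapping.keys p. dg C m = A" "\<forall>m\<in>Poly_Mapping.keys q. dg C m = B"
  shows "\<forall>m\<in>Poly_Mapping.keys (p * q). dg C m = A + B"
proof
  fix m assume "m \<in> Poly_Mapping.keys (p * q)"
  then obtain a b where "m = a + b" "a \<in> Poly_Mapping.keys p" "b \<in> Poly_Mapping.keys q"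
    using Poly_Mapping.keys_mult[of p q] by blast
  then show "dg C m = A + B" using assms by (auto simp: dg_add)
qed

lemma valuation:
  fixes f g :: "'k::field pol"
  assumes "f \<noteq> 0" "g \<noteq> 0"
  shows "\<exists>m\<in>Poly_Mapping.keys (f * g). dg C m = Min (dg C ` Poly_Mapping.keys f) + Min (dg C ` Poly_Mapping.keys g)"
proof -
  define d1 where "d1 = Min (dg C ` Poly_Mapping.keys f)"
  define d2 where "d2 = Min (dg C ` Poly_Mapping.keys g)"
  have kf: "Poly_Mapping.keys f \<noteq> {}" "Poly_Mapping.keys g \<noteq> {}" using assms by auto
  have "d1 \<in> dg C ` Poly_Mapping.keys f" unfolding d1_def by (rule Min_in) (use kf in auto)
  then obtain mf where mf: "mf \<in> Poly_Mapping.keys f" "dg C mf = d1" by auto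
  have "d2 \<in> dg C ` Poly_Mapping.keys g" unfolding d2_def by (rule Min_in) (use kf in auto)
  then obtain mg where mg: "mg \<in> Poly_Mapping.keys g" "dg C mg = d2" by auto
  have ge1: "d1 \<le> dg C m" if "m \<in> Poly_Mapping.keys f" for m
    unfolding d1_def using that by auto
  have ge2: "d2 \<le> dg C m" if "m \<in> Poly_Mapping.keys g" for m
    unfolding d2_def using that by auto
  define f0 where "f0 = restr (\<lambda>m. dg C m = d1) f"
  define f1 where "f1 = restr (\<lambda>m. \<not> dg C m = d1) f"
  define g0 where "g0 = restr (\<lambda>m. dg C m = d2) g"
  define g1 where "g1 = restr (\<lambda>m. \<not> dg C m = d2) g"
  have fs: "f = f0 + f1" unfolding f0_def f1_def by (rule restr_split)
  have gs: "g = g0 + g1" unfolding g0_def g1_def by (rule restr_split)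
  have f0nz: "f0 \<noteq> 0" using mf unfolding f0_def
    by (metis (mono_tags, lifting) keys_restr keys_zero empty_iff mem_Collect_eq)
  have g0nz: "g0 \<noteq> 0" using mg unfolding g0_def
    by (metis (mono_tags, lifting) keys_restr keys_zero empty_iff mem_Collect_eq)
  have kf0: "\<forall>m\<in>Poly_Mapping.keys f0. dg C m = d1" unfolding f0_def keys_restr by auto
  have kg0: "\<forall>m\<in>Poly_Mapping.keys g0. dg C m = d2" unfolding g0_def keys_restr by auto
  have kf0': "\<forall>m\<in>Poly_Mapping.keys f0. d1 \<le> dg C m" using kf0 by auto
  have kf1: "\<forall>m\<in>Poly_Mapping.keys f1. Suc d1 \<le> dg C m" unfolding f1_def keys_restr
    using ge1 by (auto simp: le_neq_implies_less Suc_le_eq)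
  have kg1: "\<forall>m\<in>Poly_Mapping.keys g1. Suc d2 \<le> dg C m" unfolding g1_def keys_restr
    using ge2 by (auto simp: le_neq_implies_less Suc_le_eq)
  have kg: "\<forall>m\<in>Poly_Mapping.keys g. d2 \<le> dg C m" using ge2 by auto
  define rest where "rest = f0 * g1 + f1 * g"
  have prod: "f * g = f0 * g0 + rest"
  proof -
    have "f * g = (f0 + f1) * g" using fs by simp
    also have "\<dots> = f0 * g0 + (f0 * g1 + f1 * g)" using gs by (simp add: algebra_simps)
    finally show ?thesis unfolding rest_def .
  qed
  have kr: "\<forall>m\<in>Poly_Mapping.keys rest. Suc (d1 + d2) \<le> dg C m"
  proof
    fix m assume "m \<in> Poly_Mapping.keys rest"
    then have "m \<in> Poly_Mapping.keys (f0 * g1) \<or> m \<in> Poly_Mapping.keys (f1 * g)"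
      unfolding rest_def using Poly_Mapping.keys_add[of "f0 * g1" "f1 * g"] by blast
    then show "Suc (d1 + d2) \<le> dg C m"
      using keys_mult_dg[OF kf0' kg1] keys_mult_dg[OF kf1 kg] by fastforce
  qed
  have "f0 * g0 \<noteq> 0" using f0nz g0nz by simp
  then obtain m where m: "m \<in> Poly_Mapping.keys (f0 * g0)" by fastforce
  then have dm: "dg C m = d1 + d2" using keys_mult_dg_eq[OF kf0 kg0] by auto
  then have "m \<notin> Poly_Mapping.keys rest" using kr by fastforce
  then have "Poly_Mapping.lookup (f * g) m = Poly_Mapping.lookup (f0 * g0) m"
    unfolding prod by (simp add: lookup_add in_keys_iff)
  then have "m \<in> Poly_Mapping.keys (f * g)" using m by (simp add: in_keys_iff)
  then show ?thesis using dm unfolding d1_def d2_def by blast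
qed

lemma valuation_cor:
  fixes r x :: "'k::field pol"
  assumes "m1 \<in> Poly_Mapping.keys r" "dg C m1 = 0" "m2 \<in> Poly_Mapping.keys x" "dg C m2 < k"
  shows "\<exists>m\<in>Poly_Mapping.keys (r * x). dg C m < k"
proof -
  have "r \<noteq> 0" "x \<noteq> 0" using assms by auto
  then obtain m where m: "m \<in> Poly_Mapping.keys (r * x)"
    "dg C m = Min (dg C ` Poly_Mapping.keys r) + Min (dg C ` Poly_Mapping.keys x)"
    using valuation by blast
  have "Min (dg C ` Poly_Mapping.keys r) \<le> 0" using assms(1,2) by (metis Min_le finite_imageI finite_keys imageI)
  moreover have "Min (dg C ` Poly_Mapping.keys x) \<le> dg C m2" using assms(3) by simp
  ultimately show ?thesis using m assms(4) by (intro bexI[OF _ m(1)]) linarith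
qed




definition QI :: "nat \<Rightarrow> nat set \<Rightarrow> nat \<Rightarrow> 'k::field pol set" where
  "QI n C k = KI n (\<lambda>m. k \<le> dg C m)"

lemma QI_ideal: "ideal (QI n C k :: 'k::field pol set) (poly_ring n)"
  unfolding QI_def by (rule KI_ideal) (simp add: dg_add)

lemma QI_mult: "y \<in> carrier (poly_ring n) \<Longrightarrow> q \<in> QI n C k \<Longrightarrow> y * q \<in> (QI n C k :: 'k::field pol set)"
  using ideal.I_l_closed[OF QI_ideal] by fastforce

lemma var_eq: "var i = Poly_Mapping.single (Poly_Mapping.single i 1) 1"
  by (simp add: var_def)

lemma var3: "var i * var (i+1) * var (i+2) = (Poly_Mapping.single (em i) 1 :: 'k::field pol)"
  by (simp add: var_def mult_single em_def)

lemma Es_mons: "Es 1 n \<subseteq> mons n"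
proof
  fix e assume "e \<in> Es 1 n"
  then obtain i where i: "e = em i" "1 \<le> i" "i + 2 \<le> n" unfolding Es_def by auto
  have "Poly_Mapping.keys e \<subseteq> {i, Suc i, i + 2}" unfolding i(1) by (auto simp: in_keys_iff lookup_em split: if_splits)
  then show "e \<in> mons n" using i unfolding mons_def by auto
qed

lemma path_ideal_MI:
  assumes "2 \<le> n"
  shows "path_ideal n = (MI n (Es 1 n) :: 'k::field pol set)"
proof -
  have "{var i * var (i+1) * var (i+2) | i. 1 \<le> i \<and> i \<le> n - 2} = (\<lambda>g. Poly_Mapping.single g (1::'k)) ` Es 1 n"
    unfolding Es_def var3 using assms by force
  then show ?thesis unfolding path_ideal_def using genideal_MI[OF Es_mons] by metis
qed

lemma Gs_mons: "E \<subseteq> mons n \<Longrightarrow> Gs E k \<subseteq> mons n"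
proof (induction k)
  case 0
  then show ?case by (auto simp: mons_def)
next
  case (Suc k)
  show ?case
  proof
    fix g assume "g \<in> Gs E (Suc k)"
    then obtain e h where eh: "g = e + h" "e \<in> E" "h \<in> Gs E k" by (auto simp: msum_def)
    then have "Poly_Mapping.keys e \<subseteq> {1..n}" "Poly_Mapping.keys h \<subseteq> {1..n}"
      using Suc unfolding mons_def by auto
    then show "g \<in> mons n" using eh(1) Poly_Mapping.keys_add[of e h] unfolding mons_def by auto
  qed
qed

lemma ideal_pow_MI:
  "ideal_pow (poly_ring n) (MI n (Es 1 n)) k = (MI n (Gs (Es 1 n) k) :: 'k::field pol set)"
proof (induction k)
  case 0
  then show ?case by (auto simp: MI_def KI_def le_mon_zero)
next
  case (Suc k)
  then show ?case using ideal_prod_MI[OF Es_mons Gs_mons[OF Es_mons]] by simp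
qed

lemma MI_Gs_QI: "f \<in> (MI n (Gs (Es 1 n) k) :: 'k::field pol set) \<longleftrightarrow>
   f \<in> carrier (poly_ring n) \<and> (\<forall>C\<in>MC n. f \<in> QI n C k)"
  unfolding MI_def QI_def KI_def char by auto

lemma prime_one:
  assumes "primeideal P (poly_ring n :: 'k::field pol ring)"
  shows "1 \<notin> P"
proof
  assume "1 \<in> P"
  interpret primeideal P "poly_ring n :: 'k::field pol ring" by fact
  have "carrier (poly_ring n) \<subseteq> P"
  proof
    fix a :: "'k pol" assume "a \<in> carrier (poly_ring n)"
    then show "a \<in> P" using I_l_closed[OF \<open>1 \<in> P\<close>, of a] by simp
  qed
  then show False using I_notcarr a_subset by auto
qed

lemma prod_carrier: "finite A \<Longrightarrow> (\<And>a. a \<in> A \<Longrightarrow> f a \<in> carrier (poly_ring n)) \<Longrightarrow> prod f A \<in> carrier (poly_ring n)"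
  by (induction A rule: finite_induct) (auto intro: carr_mult)

lemma prime_prod:
  assumes "primeideal P (poly_ring n :: 'k::field pol ring)"
  shows "finite A \<Longrightarrow> (\<And>a. a \<in> A \<Longrightarrow> f a \<in> carrier (poly_ring n) \<and> f a \<notin> P) \<Longrightarrow> prod f A \<notin> P"
proof (induction A rule: finite_induct)
  case empty
  then show ?case using prime_one[OF assms] by simp
next
  case (insert a F)
  interpret primeideal P "poly_ring n :: 'k::field pol ring" by fact
  have "prod f F \<in> carrier (poly_ring n)" using insert by (intro prod_carrier) auto
  then show ?case using insert I_prime[of "f a" "prod f F"] by auto
qed

lemma prime_pow:
  assumes "primeideal P (poly_ring n :: 'k::field pol ring)" "a \<in> carrier (poly_ring n)"
  shows "a ^ Suc k \<in> P \<Longrightarrow> a \<in> P"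
proof (induction k)
  case 0
  then show ?case by simp
next
  case (Suc k)
  interpret primeideal P "poly_ring n :: 'k::field pol ring" by fact
  have c: "a ^ Suc k \<in> carrier (poly_ring n)" using assms(2) by (induction k) (auto intro: carr_mult)
  show ?case using Suc I_prime[OF assms(2) c] by auto
qed

lemma shift_lookup:
  fixes r :: "'k::field pol"
  shows "Poly_Mapping.lookup (r * Poly_Mapping.single u 1) (m + u) = Poly_Mapping.lookup r m"
proof -
  have "r * Poly_Mapping.single u 1 = (\<Sum>a\<in>Poly_Mapping.keys r. Poly_Mapping.single a (Poly_Mapping.lookup r a)) * Poly_Mapping.single u 1"
    by (subst (1) poly_terms[of r]) simp
  also have "\<dots> = (\<Sum>a\<in>Poly_Mapping.keys r. Poly_Mapping.single (a + u) (Poly_Mapping.lookup r a))"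
    by (simp add: sum_distrib_right mult_single)
  finally have "Poly_Mapping.lookup (r * Poly_Mapping.single u 1) (m + u) =
       (\<Sum>a\<in>Poly_Mapping.keys r. if a = m then Poly_Mapping.lookup r a else 0)"
    by (simp add: lookup_sum lookup_single when_def)
  also have "\<dots> = Poly_Mapping.lookup r m" by (simp add: sum.delta in_keys_iff)
  finally show ?thesis .
qed

lemma shift_keys:
  fixes r :: "'k::field pol"
  shows "Poly_Mapping.keys (r * Poly_Mapping.single u 1) \<subseteq> {m + u | m. m \<in> Poly_Mapping.keys r}"
  using Poly_Mapping.keys_mult[of r "Poly_Mapping.single u 1"] by auto

lemma one_le_dg_obtain:
  assumes "finite C" "1 \<le> dg C m"
  obtains i where "i \<in> C" "1 \<le> Poly_Mapping.lookup m i"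
proof -
  have "\<exists>i\<in>C. 1 \<le> Poly_Mapping.lookup m i"
  proof (rule ccontr)
    assume "\<not> ?thesis"
    then have "dg C m = 0" unfolding dg_def by (intro sum.neutral) auto
    then show False using assms by simp
  qed
  then show ?thesis using that by blast
qed

lemma dg_ge_lookup: "finite C \<Longrightarrow> i \<in> C \<Longrightarrow> Poly_Mapping.lookup m i \<le> dg C m"
  unfolding dg_def by (rule member_le_sum) auto

lemma QI_one_not_in: "(1 :: 'k::field pol) \<notin> QI n C 1"
  unfolding QI_def KI_def by (simp add: dg_def)

lemma QI_prime:
  assumes "finite C"
  shows "primeideal (QI n C 1 :: 'k::field pol set) (poly_ring n)"
proof (rule primeidealI[OF QI_ideal cring_poly_ring])
  show "carrier (poly_ring n) \<noteq> (QI n C 1 :: 'k pol set)" using QI_one_not_in carr_one by metis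
  fix a b :: "'k pol" assume ab: "a \<in> carrier (poly_ring n)" "b \<in> carrier (poly_ring n)" "a \<otimes>\<^bsub>poly_ring n\<^esub> b \<in> QI n C 1"
  show "a \<in> QI n C 1 \<or> b \<in> QI n C 1"
  proof (rule ccontr)
    assume "\<not> ?thesis"
    then obtain m1 m2 where "m1 \<in> Poly_Mapping.keys a" "dg C m1 = 0" "m2 \<in> Poly_Mapping.keys b" "dg C m2 < 1"
      using ab unfolding QI_def KI_def by force
    then obtain m where "m \<in> Poly_Mapping.keys (a * b)" "dg C m < 1" using valuation_cor by blast
    then show False using ab(3) unfolding QI_def KI_def by auto
  qed
qed




lemma QI_ass:
  assumes C: "C \<in> MC n"
  shows "(QI n C 1 :: 'k::field pol set) \<in> ass (poly_ring n) (MI n (Es 1 n))"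
proof -
  have finC: "finite C" using C MC_finite by blast
  have Cs: "C \<subseteq> {1..n}" "cover 1 n C" "\<forall>C'. C' \<subset> C \<longrightarrow> \<not> cover 1 n C'" using C unfolding MC_def by auto
  define u :: "nat \<Rightarrow>\<^sub>0 nat" where "u = (\<Sum>j\<in>{1..n} - C. Poly_Mapping.single j 1)"
  have lu: "Poly_Mapping.lookup u v = (if v \<in> {1..n} - C then 1 else 0)" for v
    unfolding u_def by (simp add: lookup_sum lookup_single when_def sum.delta' del: Diff_iff)
  have ku: "Poly_Mapping.keys u \<subseteq> {1..n}" using lu by (auto simp: in_keys_iff split: if_splits)
  define y :: "'k pol" where "y = Poly_Mapping.single u 1"
  have yc: "y \<in> carrier (poly_ring n)" unfolding y_def using single_carrier[OF ku] .
  have eq: "QI n C 1 = {r \<in> carrier (poly_ring n). r \<otimes>\<^bsub>poly_ring n\<^esub> y \<in> MI n (Es 1 n)}"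
  proof (rule equalityI; rule subsetI)
    fix r :: "'k pol" assume r: "r \<in> QI n C 1"
    then have rc: "r \<in> carrier (poly_ring n)" unfolding QI_def KI_def by auto
    have "\<exists>g\<in>Es 1 n. le_mon g m'" if m': "m' \<in> Poly_Mapping.keys (r * y)" for m'
    proof -
      obtain m where m: "m' = m + u" "m \<in> Poly_Mapping.keys r" using shift_keys[of r u] m' unfolding y_def by auto
      then have "1 \<le> dg C m" using r unfolding QI_def KI_def by auto
      then obtain i where i: "i \<in> C" "1 \<le> Poly_Mapping.lookup m i" using one_le_dg_obtain finC by blast
      have "C - {i} \<subset> C" using i by auto
      then have "\<not> cover 1 n (C - {i})" using Cs(3) by blast
      then obtain j where j: "1 \<le> j" "j + 2 \<le> n" "j \<notin> C - {i}" "Suc j \<notin> C - {i}" "j + 2 \<notin> C - {i}"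
        unfolding cover_def by blast
      have "le_mon (em j) m'"
        unfolding le_mon_def m(1) lookup_add lookup_em lu using i j by auto
      moreover have "em j \<in> Es 1 n" using j unfolding Es_def by auto
      ultimately show ?thesis by blast
    qed
    then show "r \<in> {r \<in> carrier (poly_ring n). r \<otimes>\<^bsub>poly_ring n\<^esub> y \<in> MI n (Es 1 n)}"
      using rc yc carr_mult unfolding MI_def KI_def by auto
  next
    fix r :: "'k pol" assume r: "r \<in> {r \<in> carrier (poly_ring n). r \<otimes>\<^bsub>poly_ring n\<^esub> y \<in> MI n (Es 1 n)}"
    then have rc: "r \<in> carrier (poly_ring n)" and ry: "r * y \<in> MI n (Es 1 n)" by auto
    have "1 \<le> dg C m" if m: "m \<in> Poly_Mapping.keys r" for m
    proof -
      have "m + u \<in> Poly_Mapping.keys (r * y)" using m shift_lookup[of r u m] unfolding y_def by (simp add: in_keys_iff)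
      then obtain g where g: "g \<in> Es 1 n" "le_mon g (m + u)" using ry unfolding MI_def KI_def by auto
      then obtain j where j: "g = em j" "1 \<le> j" "j + 2 \<le> n" unfolding Es_def by auto
      then obtain v where v: "v \<in> C" "v = j \<or> v = Suc j \<or> v = j + 2" using Cs(2) unfolding cover_def by blast
      have "1 \<le> Poly_Mapping.lookup (m + u) v" using g(2) v j unfolding le_mon_def
        by (metis lookup_em)
      then have "1 \<le> Poly_Mapping.lookup m v" using v by (simp add: lookup_add lu)
      then show ?thesis using dg_ge_lookup[OF finC v(1), of m] by linarith
    qed
    then show "r \<in> QI n C 1" using rc unfolding QI_def KI_def by auto
  qed
  show ?thesis unfolding ass_def using QI_prime[OF finC] yc eq by blast
qed

lemma dg_single: "finite C \<Longrightarrow> i \<in> C \<Longrightarrow> dg C (Poly_Mapping.single i 1) = 1"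
  unfolding dg_def by (simp add: lookup_single when_def)

lemma var_pow_keys:
  assumes "finite C" "i \<in> C"
  shows "\<forall>m\<in>Poly_Mapping.keys ((var i :: 'k::field pol) ^ k). k \<le> dg C m"
proof (induction k)
  case 0
  then show ?case by simp
next
  case (Suc k)
  have "\<forall>m\<in>Poly_Mapping.keys (var i :: 'k::field pol). 1 \<le> dg C m"
    using dg_single[OF assms] by (simp add: var_def)
  from keys_mult_dg[OF this Suc] show ?case by simp
qed

lemma var_carrier: "i \<in> {1..n} \<Longrightarrow> (var i :: 'k::field pol) \<in> carrier (poly_ring n)"
  unfolding var_def by (rule single_carrier) auto

lemma pow_carrier: "a \<in> carrier (poly_ring n) \<Longrightarrow> a ^ k \<in> carrier (poly_ring n)"
  by (induction k) (auto intro: carr_mult)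

lemma main_ass:
  assumes k: "1 \<le> k" and P: "P \<in> ass (poly_ring n) (MI n (Gs (Es 1 n) k) :: 'k::field pol set)"
  shows "P \<in> ass (poly_ring n) (MI n (Es 1 n))"
proof -
  obtain x where x: "x \<in> carrier (poly_ring n)" and pr: "primeideal P (poly_ring n)"
    and Peq: "P = {r \<in> carrier (poly_ring n). r * x \<in> MI n (Gs (Es 1 n) k)}"
    using P unfolding ass_def by auto
  interpret primeideal P "poly_ring n :: 'k pol ring" by (rule pr)
  have step1: "\<exists>C\<in>MC n. x \<notin> QI n C k \<and> (\<forall>r\<in>carrier (poly_ring n). r * x \<in> QI n C k \<longrightarrow> r \<in> P)"
  proof (rule ccontr)
    assume "\<not> ?thesis"
    then have "\<forall>C\<in>MC n. \<exists>r. r \<in> carrier (poly_ring n) \<and> r * x \<in> QI n C k \<and> r \<notin> P"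
      using prime_one[OF pr] x by (metis carr_one mult_1)
    then obtain rf where rf: "\<forall>C\<in>MC n. rf C \<in> carrier (poly_ring n) \<and> rf C * x \<in> QI n C k \<and> rf C \<notin> P"
      by metis
    define r where "r = prod rf (MC n)"
    have rc: "r \<in> carrier (poly_ring n)" unfolding r_def using rf finite_MC by (intro prod_carrier) auto
    have rP: "r \<notin> P" unfolding r_def using prime_prod[OF pr finite_MC] rf by blast
    have "r * x \<in> QI n C k" if C: "C \<in> MC n" for C
    proof -
      have "r = prod rf (MC n - {C}) * rf C" unfolding r_def using C finite_MC
        by (metis mult.commute prod.remove)
      then have "r * x = prod rf (MC n - {C}) * (rf C * x)" by (simp add: mult.assoc)
      moreover have "prod rf (MC n - {C}) \<in> carrier (poly_ring n)" using rf finite_MC by (intro prod_carrier) auto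
      ultimately show ?thesis using QI_mult rf C by metis
    qed
    then have "\<forall>C\<in>MC n. r * x \<in> QI n C k" by (intro ballI)
    then have "r * x \<in> MI n (Gs (Es 1 n) k)" by (rule iffD2[OF MI_Gs_QI, OF conjI[OF carr_mult[OF rc x]]])
    then have "r \<in> P" unfolding Peq using rc by blast
    then show False using rP by simp
  qed
  then obtain C where C: "C \<in> MC n" "x \<notin> QI n C k" and Cr: "\<forall>r\<in>carrier (poly_ring n). r * x \<in> QI n C k \<longrightarrow> r \<in> P"
    by blast
  have finC: "finite C" using C MC_finite by blast
  have CS: "C \<subseteq> {1..n}" using C unfolding MC_def by auto
  have sub1: "P \<subseteq> QI n C 1"
  proof
    fix r assume r: "r \<in> P"
    then have rc: "r \<in> carrier (poly_ring n)" and rmx: "r * x \<in> MI n (Gs (Es 1 n) k)"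
      unfolding Peq by blast+
    then have rx: "r * x \<in> QI n C k" using iffD1[OF MI_Gs_QI rmx] C(1) by blast
    show "r \<in> QI n C 1"
    proof (rule ccontr)
      assume "r \<notin> QI n C 1"
      then obtain m1 where "m1 \<in> Poly_Mapping.keys r" "dg C m1 = 0" using rc unfolding QI_def KI_def by force
      moreover obtain m2 where "m2 \<in> Poly_Mapping.keys x" "dg C m2 < k" using C(2) x unfolding QI_def KI_def by force
      ultimately obtain m where "m \<in> Poly_Mapping.keys (r * x)" "dg C m < k" using valuation_cor by blast
      then show False using rx unfolding QI_def KI_def by auto
    qed
  qed
  have varP: "var i \<in> P" if i: "i \<in> C" for i
  proof -
    have vc: "(var i :: 'k pol) \<in> carrier (poly_ring n)" using var_carrier CS i by blast
    have "\<forall>m\<in>Poly_Mapping.keys (var i ^ k * x). k + 0 \<le> dg C m"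
      by (rule keys_mult_dg[OF var_pow_keys[OF finC i]]) simp
    then have "var i ^ k * x \<in> QI n C k" using carr_mult[OF pow_carrier[OF vc, of k] x] unfolding QI_def KI_def by auto
    then have "var i ^ k \<in> P" using Cr pow_carrier[OF vc, of k] by blast
    moreover have "k = Suc (k - 1)" using k by simp
    ultimately show ?thesis using prime_pow[OF pr vc] by metis
  qed
  have sub2: "QI n C 1 \<subseteq> P"
  proof
    fix f :: "'k pol" assume f: "f \<in> QI n C 1"
    show "f \<in> P"
    proof (rule ideal_from_terms[OF is_ideal])
      fix m assume m: "m \<in> Poly_Mapping.keys f"
      then have "1 \<le> dg C m" using f unfolding QI_def KI_def by auto
      then obtain i where i: "i \<in> C" "1 \<le> Poly_Mapping.lookup m i" using one_le_dg_obtain finC by blast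
      have le: "le_mon (Poly_Mapping.single i 1) m" using i unfolding le_mon_def by (simp add: lookup_single when_def)
      have c: "Poly_Mapping.single (m - Poly_Mapping.single i 1) (Poly_Mapping.lookup f m) \<in> carrier (poly_ring n)"
        using f m keys_diff_sub[of m "Poly_Mapping.single i 1"] unfolding QI_def KI_def carrier_poly_ring by auto
      have "Poly_Mapping.single m (Poly_Mapping.lookup f m) = Poly_Mapping.single (m - Poly_Mapping.single i 1) (Poly_Mapping.lookup f m) * var i"
        unfolding var_def by (rule single_mult_split[OF le])
      then show "Poly_Mapping.single m (Poly_Mapping.lookup f m) \<in> P"
        using I_l_closed[OF varP[OF i(1)] c] by simp
    qed
  qed
  have "P = QI n C 1" using sub1 sub2 by blast
  then show ?thesis using QI_ass[OF C(1)] by simp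
qed

theorem corollary2p4:
  fixes n :: nat
  assumes "n \<ge> 3"
  shows "normally_torsion_free (poly_ring n :: ((nat \<Rightarrow>\<^sub>0 nat) \<Rightarrow>\<^sub>0 'k::field) ring)
           (path_ideal n)"
  unfolding normally_torsion_free_def
proof (intro allI impI subsetI)
  fix k P assume k: "1 \<le> k" and P: "P \<in> ass (poly_ring n :: 'k pol ring) (ideal_pow (poly_ring n) (path_ideal n) k)"
  have L: "path_ideal n = (MI n (Es 1 n) :: 'k pol set)" by (rule path_ideal_MI) (use assms in simp)
  show "P \<in> ass (poly_ring n) (path_ideal n)"
    using main_ass[OF k] P unfolding L ideal_pow_MI by simp
qed



end
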